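(* Let $b>1$, $g_0(t)=b^j$ for $j<t\leq j+1$ ($j\in\mathbb{N}_0$), $\lambda_b=\left(\arccos\frac1{R_b}\right)^2$ with $R_b=\frac{b^{1/2}+b^{-1/2}}2$. Let $\omega$ be a nonzero function on $\mathbb{R}_+$ with $\omega(0)>0$ satisfying in the distributional sense $-(g_0\omega')'=\lambda_bg_0\omega$ together with $\omega'(0)=0$, $\omega(j+)=\omega(j-)$ and $\omega'(j-)=b\,\omega'(j+)$ for all $j\in\mathbb{N}$. Then there exist constants $0<C_1<C_2<\infty$ such that \[ C_1\frac{1+t}{\sqrt{g_0(t)}}\leq\omega(t)\leq C_2\frac{1+t}{\sqrt{g_0(t)}},\qquad t\geq0. \] *)

theory Defs
  imports "HOL-Analysis.Analysis"
begin

text \<open>g_0(t) = b^j for j < t \<le> j+1 (j = 0,1,...); at t = 0 we use the value b^0 = 1.\<close>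
definition g0 :: "real \<Rightarrow> real \<Rightarrow> real" where
  "g0 b t = b ^ nat (\<lceil>t\<rceil> - 1)"

definition R_b :: "real \<Rightarrow> real" where
  "R_b b = (sqrt b + 1 / sqrt b) / 2"

definition lambda_b :: "real \<Rightarrow> real" where
  "lambda_b b = (arccos (1 / R_b b))\<^sup>2"

end

theory Submission
  imports Defs
begin

lemma ode_unique:
  fixes w D :: "real \<Rightarrow> real" and a x y \<mu> :: real
  assumes mu: "\<mu> > 0"
    and ode: "\<And>t. a < t \<Longrightarrow> t < a + 1 \<Longrightarrow>
       (w has_real_derivative D t) (at t) \<and> (D has_real_derivative (- (\<mu>\<^sup>2) * w t)) (at t)"
    and lw: "(w \<longlongrightarrow> x) (at_right a)" and lD: "(D \<longlongrightarrow> y) (at_right a)"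
    and t: "a < t" "t < a + 1"
  shows "w t = x * cos (\<mu>*(t-a)) + y * sin (\<mu>*(t-a)) / \<mu> \<and>
         D t = - \<mu> * x * sin (\<mu>*(t-a)) + y * cos (\<mu>*(t-a))"
proof -
  define u where "u s = w s - (x * cos (\<mu>*(s-a)) + y * sin (\<mu>*(s-a)) / \<mu>)" for s
  define v where "v s = D s - (- \<mu> * x * sin (\<mu>*(s-a)) + y * cos (\<mu>*(s-a)))" for s
  define E where "E s = \<mu>\<^sup>2 * (u s)\<^sup>2 + (v s)\<^sup>2" for s
  have du: "(u has_real_derivative v s) (at s)" if "a < s" "s < a + 1" for s
  proof -
    have "(u has_real_derivative D s - (x * (- sin (\<mu>*(s-a)) * (\<mu> * 1)) + y * (cos (\<mu>*(s-a)) * (\<mu>*1)) / \<mu>)) (at s)"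
      unfolding u_def using ode[OF that]
      by (auto intro!: derivative_eq_intros)
    then show ?thesis using mu by (simp add: v_def field_simps)
  qed
  have dv: "(v has_real_derivative - (\<mu>\<^sup>2) * u s) (at s)" if "a < s" "s < a + 1" for s
  proof -
    have "(v has_real_derivative - (\<mu>\<^sup>2) * w s - (- \<mu> * x * (cos (\<mu>*(s-a)) * (\<mu> * 1)) + y * (- sin (\<mu>*(s-a)) * (\<mu>*1)))) (at s)"
      unfolding v_def using ode[OF that]
      by (auto intro!: derivative_eq_intros)
    moreover have "- (\<mu>\<^sup>2) * w s - (- \<mu> * x * (cos (\<mu>*(s-a)) * (\<mu> * 1)) + y * (- sin (\<mu>*(s-a)) * (\<mu>*1))) = - (\<mu>\<^sup>2) * u s"
      using mu by (simp add: u_def field_simps power2_eq_square)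
    ultimately show ?thesis by simp
  qed
  have dE: "(E has_real_derivative 0) (at s within {a<..<a+1})" if "s \<in> {a<..<a+1}" for s
  proof -
    from that have s: "a < s" "s < a + 1" by auto
    have "(E has_real_derivative \<mu>\<^sup>2 * (2 * u s * v s) + 2 * v s * (- (\<mu>\<^sup>2) * u s)) (at s)"
      unfolding E_def using du[OF s] dv[OF s]
      by (auto intro!: derivative_eq_intros simp: power2_eq_square)
    then show ?thesis by (auto intro: has_field_derivative_at_within simp: algebra_simps)
  qed
  have cv: "convex {a<..<a+1}" by (simp add: convex_real_interval)
  obtain c where c: "\<forall>s\<in>{a<..<a+1}. E s = c"
    using has_field_derivative_zero_constant[OF cv dE] by blast
  have "((\<lambda>s. u s) \<longlongrightarrow> x - (x * cos (\<mu>*(a-a)) + y * sin (\<mu>*(a-a)) / \<mu>)) (at_right a)"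
    unfolding u_def using mu by (intro tendsto_intros lw) auto
  then have ul: "(u \<longlongrightarrow> 0) (at_right a)" by simp
  have "((\<lambda>s. v s) \<longlongrightarrow> y - (- \<mu> * x * sin (\<mu>*(a-a)) + y * cos (\<mu>*(a-a)))) (at_right a)"
    unfolding v_def by (intro tendsto_intros lD)
  then have vl: "(v \<longlongrightarrow> 0) (at_right a)" by simp
  have "(E \<longlongrightarrow> \<mu>\<^sup>2 * 0\<^sup>2 + 0\<^sup>2) (at_right a)"
    unfolding E_def by (intro tendsto_intros ul vl)
  then have E0: "(E \<longlongrightarrow> 0) (at_right a)" by simp
  have ev: "eventually (\<lambda>s. E s = c) (at_right a)"
    unfolding eventually_at_right_field
  proof (intro exI[of _ "a+1"] conjI allI impI)
    show "a < a + 1" by simp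
  next
    fix s assume "a < s" "s < a + 1"
    then show "E s = c" using c by simp
  qed
  have "((\<lambda>_. c) \<longlongrightarrow> 0) (at_right a)"
    using Lim_transform_eventually[OF E0 ev] .
  then have "c = 0" using tendsto_const_iff[OF trivial_limit_at_right_real] by blast
  then have "E t = 0" using c t by auto
  then have "\<mu>\<^sup>2 * (u t)\<^sup>2 = 0 \<and> (v t)\<^sup>2 = 0" unfolding E_def
    by (intro add_nonneg_eq_0_iff[THEN iffD1]) auto
  then have "u t = 0 \<and> v t = 0" using mu by simp
  then show ?thesis unfolding u_def v_def by auto
qed

lemma cqlem: "(rb::real) > 1 \<Longrightarrow> 2*rb/(rb\<^sup>2+1) = 1/rb + ((rb\<^sup>2-1)/(rb\<^sup>2+1)) / rb"
proof -
  assume rb: "rb > 1"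
  have d: "rb\<^sup>2 + 1 \<noteq> 0" by (smt (verit) zero_le_power2)
  have r: "rb \<noteq> 0" using rb by simp
  have "1/rb + ((rb\<^sup>2-1)/(rb\<^sup>2+1)) / rb = (1 + (rb\<^sup>2-1)/(rb\<^sup>2+1)) / rb"
    by (simp add: add_divide_distrib)
  also have "1 + (rb\<^sup>2-1)/(rb\<^sup>2+1) = (2*rb\<^sup>2)/(rb\<^sup>2+1)"
    using d by (simp add: field_simps)
  also have "(2*rb\<^sup>2)/(rb\<^sup>2+1) / rb = 2*rb/(rb\<^sup>2+1)"
    using r by (simp add: power2_eq_square)
  finally show ?thesis by simp
qed

lemma mu_facts:
  assumes b: "b > (1::real)"
  defines "\<mu> \<equiv> arccos (1 / R_b b)"
  shows "lambda_b b = \<mu>\<^sup>2" "cos \<mu> = 1/sqrt b + sin \<mu> / sqrt b"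
    "sin \<mu> + cos \<mu> / sqrt b = 1" "0 < sin \<mu>" "sin \<mu> < 1" "0 < \<mu>" "\<mu> < pi/2"
proof -
  define rb where "rb = sqrt b"
  have rb: "rb > 1" "b = rb\<^sup>2" using b by (auto simp: rb_def)
  have R: "1 / R_b b = 2*rb/(rb\<^sup>2+1)" unfolding R_b_def rb_def[symmetric]
    using rb by (simp add: field_simps power2_eq_square)
  have p: "0 < 2*rb/(rb\<^sup>2+1)" using rb by (intro divide_pos_pos) (auto intro: add_nonneg_pos)
  have "(rb - 1)\<^sup>2 > 0" using rb by simp
  then have l: "2*rb/(rb\<^sup>2+1) < 1" using rb by (simp add: field_simps power2_eq_square algebra_simps)
  have c: "cos \<mu> = 2*rb/(rb\<^sup>2+1)" unfolding \<mu>_def R using p l by simp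
  have d0: "rb\<^sup>2 + 1 > 0" by (simp add: add_nonneg_pos)
  have alg: "(rb\<^sup>2+1)\<^sup>2 - (2*rb)\<^sup>2 = (rb\<^sup>2-1)\<^sup>2" by algebra
  have "1 - (2*rb/(rb\<^sup>2+1))\<^sup>2 = ((rb\<^sup>2+1)\<^sup>2 - (2*rb)\<^sup>2) / (rb\<^sup>2+1)\<^sup>2"
    using d0 by (simp add: power_divide diff_divide_distrib)
  also have "\<dots> = ((rb\<^sup>2-1)/(rb\<^sup>2+1))\<^sup>2" unfolding alg by (simp add: power_divide)
  finally have eqs: "1 - (2*rb/(rb\<^sup>2+1))\<^sup>2 = ((rb\<^sup>2-1)/(rb\<^sup>2+1))\<^sup>2" .
  have r2: "rb\<^sup>2 > 1" using rb by (simp add: one_less_power)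
  have spos: "(rb\<^sup>2-1)/(rb\<^sup>2+1) > 0" using r2 d0 by (intro divide_pos_pos) auto
  moreover note spos
  ultimately have s: "sin \<mu> = (rb\<^sup>2-1)/(rb\<^sup>2+1)" unfolding \<mu>_def R using p l eqs r2
    by (simp add: sin_arccos)
  show "lambda_b b = \<mu>\<^sup>2" unfolding lambda_b_def \<mu>_def ..
  show "cos \<mu> = 1/sqrt b + sin \<mu> / sqrt b" unfolding rb_def[symmetric] c s
    using cqlem[OF rb(1)] .
  have d: "rb\<^sup>2 + 1 > 0" by (simp add: add_nonneg_pos)
  have e2: "2*rb/(rb\<^sup>2+1) / rb = 2/(rb\<^sup>2+1)" using rb by simp
  have "(rb\<^sup>2-1)/(rb\<^sup>2+1) + 2*rb/(rb\<^sup>2+1) / rb = ((rb\<^sup>2-1) + 2)/(rb\<^sup>2+1)"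
    unfolding e2 by (metis add_divide_distrib)
  also have "\<dots> = 1" using d by simp
  finally show "sin \<mu> + cos \<mu> / sqrt b = 1" unfolding rb_def[symmetric] c s .
  show sp: "0 < sin \<mu>" using s spos by simp
  show "sin \<mu> < 1" using s d0 by simp
  have bd: "0 \<le> \<mu>" "\<mu> \<le> pi" unfolding \<mu>_def R using p l arccos_bounded[of "2*rb/(rb\<^sup>2+1)"] by auto
  show "0 < \<mu>" using bd sp by (cases "\<mu> = 0") auto
  show "\<mu> < pi/2"
  proof (rule ccontr)
    assume "\<not> \<mu> < pi/2"
    then have "cos \<mu> \<le> 0" using bd cos_ge_zero[of "\<mu> - pi"] by (simp add: cos_diff)
    then show False using c p by simp
  qed
qed

theorem lemma4p2:
  fixes b :: real and \<omega> D :: "real \<Rightarrow> real"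
  assumes b_gt: "b > 1"
    and nonzero: "\<exists>t\<ge>0. \<omega> t \<noteq> 0"
    and pos0: "\<omega> 0 > 0"
    and cont: "continuous_on {0..} \<omega>"
    and ode: "\<And>(j::nat) t. real j < t \<Longrightarrow> t < real j + 1 \<Longrightarrow>
                 (\<omega> has_real_derivative D t) (at t) \<and>
                 (D has_real_derivative (- lambda_b b * \<omega> t)) (at t)"
    and deriv0: "(D \<longlongrightarrow> 0) (at_right 0)"
    and jump: "\<And>(j::nat). j \<ge> 1 \<Longrightarrow>
                 \<exists>r. (D \<longlongrightarrow> b * r) (at_left (real j)) \<and> (D \<longlongrightarrow> r) (at_right (real j))"
  shows "\<exists>C1 C2. 0 < C1 \<and> C1 < C2 \<and>
           (\<forall>t\<ge>0. C1 * (1 + t) / sqrt (g0 b t) \<le> \<omega> t \<and>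
                   \<omega> t \<le> C2 * (1 + t) / sqrt (g0 b t))"
proof -
  define \<mu> where "\<mu> = arccos (1 / R_b b)"
  define s where "s = sin \<mu>"
  define q where "q = 1 / sqrt b"
  define w0 where "w0 = \<omega> 0"
  note mf = mu_facts[OF b_gt, folded \<mu>_def s_def]
  have lam: "lambda_b b = \<mu>\<^sup>2" using mf by simp
  have cq: "cos \<mu> = q + s * q" using mf(2) by (simp add: q_def)
  have sq: "s + cos \<mu> * q = 1" using mf(3) by (simp add: q_def)
  have s0: "0 < s" "s < 1" and mu0: "0 < \<mu>" "\<mu> < pi/2" using mf by auto
  have q0: "0 < q" "q < 1" using b_gt by (auto simp: q_def)
  have qb: "q * q * b = 1" using b_gt by (simp add: q_def)
  define X where "X j = w0 * q^j * (1 + s * real j)" for j :: nat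
  define Y where "Y j = - \<mu> * w0 * q^(j+1) * s * real j" for j :: nat
  have ode': "\<And>t. real j < t \<Longrightarrow> t < real j + 1 \<Longrightarrow>
       (\<omega> has_real_derivative D t) (at t) \<and> (D has_real_derivative (- (\<mu>\<^sup>2) * \<omega> t)) (at t)" for j :: nat
    using ode[of j] lam by simp
  have contj: "continuous_on {real j..real j + 1} \<omega>" for j :: nat
    by (rule continuous_on_subset[OF cont]) auto
  have form: "\<omega> t = X j * cos (\<mu>*(t-real j)) + Y j * sin (\<mu>*(t-real j)) / \<mu> \<and>
         D t = - \<mu> * X j * sin (\<mu>*(t-real j)) + Y j * cos (\<mu>*(t-real j))"
    if st: "\<omega> (real j) = X j \<and> (D \<longlongrightarrow> Y j) (at_right (real j))"
      and t: "real j < t" "t < real j + 1" for j t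
  proof -
    have "(\<omega> \<longlongrightarrow> \<omega> (real j)) (at_right (real j))"
      by (rule continuous_on_Icc_at_rightD[OF contj]) simp
    then show ?thesis using ode_unique[where a="real j" and x="X j" and y="Y j" and w=\<omega> and D=D and \<mu>=\<mu>, OF mu0(1) ode'[of j]] st t by auto
  qed
  have state: "\<omega> (real j) = X j \<and> (D \<longlongrightarrow> Y j) (at_right (real j))" for j :: nat
  proof (induction j)
    case 0
    then show ?case using deriv0 by (simp add: X_def Y_def w0_def)
  next
    case (Suc j)
    define F where "F t = X j * cos (\<mu>*(t-real j)) + Y j * sin (\<mu>*(t-real j)) / \<mu>" for t
    define G where "G t = - \<mu> * X j * sin (\<mu>*(t-real j)) + Y j * cos (\<mu>*(t-real j))" for t
    have evF: "eventually (\<lambda>t. \<omega> t = F t \<and> D t = G t) (at_left (real j + 1))"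
      unfolding eventually_at_left_field
    proof (intro exI[of _ "real j"] conjI allI impI)
      show "real j < real j + 1" by simp
    next
      fix y assume "real j < y" "y < real j + 1"
      then show "\<omega> y = F y" using form[OF Suc.IH] unfolding F_def G_def by blast
    next
      fix y assume "real j < y" "y < real j + 1"
      then show "D y = G y" using form[OF Suc.IH] unfolding F_def G_def by blast
    qed
    have "(\<omega> \<longlongrightarrow> \<omega> (real j + 1)) (at_left (real j + 1))"
      by (rule continuous_on_Icc_at_leftD[OF contj]) simp
    moreover have "(\<omega> \<longlongrightarrow> F (real j + 1)) (at_left (real j + 1))"
    proof (rule Lim_transform_eventually)
      have "isCont F (real j + 1)" unfolding F_def using mu0 by (auto intro!: continuous_intros)
      then show "(F \<longlongrightarrow> F (real j + 1)) (at_left (real j + 1))"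
        by (simp add: isCont_def filterlim_at_split)
      show "\<forall>\<^sub>F x in at_left (real j + 1). F x = \<omega> x" using evF by (auto elim: eventually_mono)
    qed
    ultimately have w1: "\<omega> (real j + 1) = F (real j + 1)"
      by (rule tendsto_unique[OF trivial_limit_at_left_real])
    have DG: "(D \<longlongrightarrow> G (real j + 1)) (at_left (real j + 1))"
    proof (rule Lim_transform_eventually)
      have "isCont G (real j + 1)" unfolding G_def by (auto intro!: continuous_intros)
      then show "(G \<longlongrightarrow> G (real j + 1)) (at_left (real j + 1))"
        by (simp add: isCont_def filterlim_at_split)
      show "\<forall>\<^sub>F x in at_left (real j + 1). G x = D x" using evF by (auto elim: eventually_mono)
    qed
    have FX: "F (real j + 1) = X (Suc j)"
    proof -
      have "F (real j + 1) = X j * cos \<mu> + Y j * s / \<mu>" by (simp add: F_def s_def)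
      also have "Y j * s / \<mu> = - w0 * q^(j+1) * s * j * s"
        unfolding Y_def using mu0(1) by simp
      also have "X j * cos \<mu> + - w0 * q^(j+1) * s * j * s = w0 * q^j * ((1 + s * j) * cos \<mu> - q * s * j * s)"
        unfolding X_def by (simp add: algebra_simps)
      also have "\<dots> = w0 * q^j * (q * (1 + s * (j+1)))"
        unfolding cq by (simp add: algebra_simps)
      also have "\<dots> = X (Suc j)" unfolding X_def by (simp add: algebra_simps)
      finally show ?thesis .
    qed
    have GY: "G (real j + 1) = b * Y (Suc j)"
    proof -
      have "G (real j + 1) = - \<mu> * s * w0 * q^j * (1 + s * j + q * j * cos \<mu>)"
        unfolding G_def X_def Y_def by (simp add: algebra_simps s_def)
      also have "1 + s * j + q * j * cos \<mu> = real j + 1"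
      proof -
        have "1 + s * j + q * j * cos \<mu> = 1 + j * (s + cos \<mu> * q)" by (simp add: algebra_simps)
        then show ?thesis using sq by simp
      qed
      also have "- \<mu> * s * w0 * q^j * (real j + 1) = b * Y (Suc j)"
      proof -
        have "b * Y (Suc j) = (b*(q*q)) * (- \<mu> * s * w0 * q^j * (real j + 1))"
          unfolding Y_def by (simp add: algebra_simps)
        also have "b*(q*q) = 1" using qb by (simp add: mult.commute)
        finally show ?thesis by simp
      qed
      finally show ?thesis .
    qed
    obtain r where r: "(D \<longlongrightarrow> b * r) (at_left (real (Suc j)))" "(D \<longlongrightarrow> r) (at_right (real (Suc j)))"
      using jump[of "Suc j"] by auto
    have DG': "(D \<longlongrightarrow> b * Y (Suc j)) (at_left (real (Suc j)))" using DG GY by (simp add: add.commute)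
    have "b * r = b * Y (Suc j)"
      by (rule tendsto_unique[OF trivial_limit_at_left_real r(1) DG'])
    then have "r = Y (Suc j)" using b_gt by simp
    then show ?case using r(2) w1 FX by (simp add: add.commute)
  qed
  have bounds: "w0 * q^(j+1) * (1 + s * (j+1)) \<le> \<omega> t \<and> \<omega> t \<le> w0 * q^j * (1 + s * j)"
    if t: "real j < t" "t \<le> real j + 1" for j t
  proof -
    define \<tau> where "\<tau> = t - real j"
    have \<tau>: "0 < \<tau>" "\<tau> \<le> 1" using t by (auto simp: \<tau>_def)
    have w: "\<omega> t = w0 * q^j * ((1 + s*j) * cos (\<mu>*\<tau>) - q* s*j * sin (\<mu>*\<tau>))"
    proof (cases "t < real j + 1")
      case True
      then show ?thesis using form[OF state t(1)] mu0 unfolding X_def Y_def \<tau>_def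
        by (simp add: field_simps)
    next
      case False
      then have "t = real (Suc j)" "\<tau> = 1" using t by (auto simp: \<tau>_def)
      then have "\<omega> t = X (Suc j)" using state[of "Suc j"] by simp
      also have "\<dots> = w0 * q^j * (q * (1 + s * (j+1)))" unfolding X_def by (simp add: algebra_simps)
      also have "\<dots> = w0 * q^j * ((1 + s * j) * cos \<mu> - q * s * j * s)"
        unfolding cq by (simp add: algebra_simps)
      finally show ?thesis using \<open>\<tau> = 1\<close> by (simp add: s_def)
    qed
    have m: "0 \<le> \<mu>*\<tau>" "\<mu>*\<tau> \<le> \<mu>" using \<tau> mu0 by (auto simp: mult_left_le)
    have c1: "cos \<mu> \<le> cos (\<mu>*\<tau>)" using m mu0 by (intro cos_monotone_0_pi_le) auto
    have s1: "sin (\<mu>*\<tau>) \<le> s" unfolding s_def using m mu0 by (intro sin_monotone_2pi_le) auto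
    have mpi: "\<mu>*\<tau> \<le> pi" using m mu0 pi_gt_zero by linarith
    have s2: "0 \<le> sin (\<mu>*\<tau>)" using m(1) mpi by (rule sin_ge_zero)
    have A: "0 \<le> 1 + s*j" "0 \<le> q* s*j" using s0 q0 by auto
    have h1: "(1 + s*j) * cos \<mu> - q* s*j * s \<le> (1 + s*j) * cos (\<mu>*\<tau>) - q* s*j * sin (\<mu>*\<tau>)"
      using mult_left_mono[OF c1 A(1)] mult_left_mono[OF s1 A(2)] by linarith
    have h2: "(1 + s*j) * cos \<mu> - q* s*j * s = q * (1 + s * (j+1))"
      unfolding cq by (simp add: algebra_simps)
    have h3: "(1 + s*j) * cos (\<mu>*\<tau>) - q* s*j * sin (\<mu>*\<tau>) \<le> 1 + s*j"
      using mult_left_mono[OF cos_le_one[of "\<mu>*\<tau>"] A(1)] mult_nonneg_nonneg[OF A(2) s2] by (smt (verit))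
    have L: "0 \<le> w0 * q^j" using pos0 q0 by (simp add: w0_def)
    have lo: "w0 * q^(j+1) * (1 + s * (j+1)) = (w0 * q^j) * (q * (1 + s * (j+1)))" by (simp add: algebra_simps)
    have "(w0 * q^j) * (q * (1 + s * (j+1))) \<le> (w0 * q^j) * ((1 + s*j) * cos (\<mu>*\<tau>) - q* s*j * sin (\<mu>*\<tau>))"
      using h1 h2 L by (intro mult_left_mono) auto
    moreover have "(w0 * q^j) * ((1 + s*j) * cos (\<mu>*\<tau>) - q* s*j * sin (\<mu>*\<tau>)) \<le> (w0 * q^j) * (1 + s*j)"
      using h3 L by (intro mult_left_mono) auto
    ultimately show ?thesis unfolding w lo by simp
  qed
  have C1: "0 < w0 * q * s" using pos0 q0 s0 by (simp add: w0_def)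
  have qs: "q * s < 1" using q0 s0 mult_strict_mono[of q 1 s 1] by simp
  have C2: "w0 * q * s < w0" using mult_strict_left_mono[OF qs, of w0] pos0 by (simp add: w0_def mult.assoc)
  have main: "\<forall>t\<ge>0. w0 * q * s * (1 + t) / sqrt (g0 b t) \<le> \<omega> t \<and> \<omega> t \<le> w0 * (1 + t) / sqrt (g0 b t)"
  proof (intro allI impI)
    fix t :: real assume t0: "0 \<le> t"
    show "w0 * q * s * (1 + t) / sqrt (g0 b t) \<le> \<omega> t \<and> \<omega> t \<le> w0 * (1 + t) / sqrt (g0 b t)"
    proof (cases "t = 0")
      case True
      then show ?thesis using pos0 q0 s0 by (simp add: g0_def w0_def mult_le_one)
    next
      case False
      define j where "j = nat (\<lceil>t\<rceil> - 1)"
      have c1: "\<lceil>t\<rceil> \<ge> 1" using False t0 by simp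
      have rj: "real j = real_of_int \<lceil>t\<rceil> - 1" unfolding j_def using c1 by simp
      have jt: "real j < t" "t \<le> real j + 1" unfolding rj
        using ceiling_correct[of t] by linarith+
      have g: "1 / sqrt (g0 b t) = q^j" unfolding g0_def j_def[symmetric] q_def
        by (simp add: real_sqrt_power power_one_over)
      have e1: "C * (1 + t) / sqrt (g0 b t) = C * (1 + t) * q^j" for C
      proof -
        have "C * (1 + t) / sqrt (g0 b t) = C * (1 + t) * (1 / sqrt (g0 b t))" by simp
        then show ?thesis unfolding g .
      qed
      from bounds[OF jt] have bd: "w0 * q^(j+1) * (1 + s * (j+1)) \<le> \<omega> t" "\<omega> t \<le> w0 * q^j * (1 + s * j)" by auto
      have w0p: "0 < w0" using pos0 by (simp add: w0_def)
      have l: "w0 * q * s * (1 + t) * q^j \<le> w0 * q^(j+1) * (1 + s * (j+1))"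
      proof -
        have "s * (1 + t) \<le> s * (real j + 2)" using jt s0 by (intro mult_left_mono) auto
        then have "s * (1 + t) \<le> 1 + s * (j+1)" using s0 by (simp add: algebra_simps)
        then have "(w0 * q^(j+1)) * (s * (1 + t)) \<le> (w0 * q^(j+1)) * (1 + s * (j+1))"
          using w0p q0 by (intro mult_left_mono) auto
        then show ?thesis by (simp add: algebra_simps)
      qed
      have u: "w0 * q^j * (1 + s * j) \<le> w0 * (1 + t) * q^j"
      proof -
        have "s * j \<le> j" using s0 by (intro mult_left_le_one_le) auto
        then have "1 + s * j \<le> 1 + t" using jt by linarith
        then have "(w0 * q^j) * (1 + s * j) \<le> (w0 * q^j) * (1 + t)"
          using w0p q0 by (intro mult_left_mono) auto
        then show ?thesis by (simp add: algebra_simps)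
      qed
      show ?thesis unfolding e1 using l u bd by linarith
    qed
  qed
  show ?thesis using C1 C2 main by blast
qed

end
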